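(* Let $\mathcal{H}$ be a Hilbert space, $0<\mu<1$, and let $A\ge0$ and $B$ be bounded operators on $\mathcal{H}$ satisfying $[B,B^*]=(1-\mu)A$ and $A+B^*B=1$. Then $\ker(B)=\{0\}$ if and only if $A=0$.
   Context: $[B,B^*]=BB^*-B^*B$; $A\ge 0$ means $A$ is a positive operator. *)

theory Defs
  imports "HOL-Analysis.Analysis"
begin

text \<open>A complex Hilbert space is modelled as a real Hilbert space
  (type class real_inner + complete_space) carrying a complex structure J
  (multiplication by the imaginary unit): J is real-linear, J(Jx) = -x, and J is
  orthogonal.  The complex inner product (linear in the second argument) is
  recovered as  cinner J x y = inner x y - i * inner (J x) y.\<close>

definition complex_structure :: "('a::real_inner \<Rightarrow> 'a) \<Rightarrow> bool" where
  "complex_structure J \<longleftrightarrow> linear J \<and> (\<forall>x. J (J x) = - x)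
      \<and> (\<forall>x y. inner (J x) (J y) = inner x y)"

definition cinner :: "('a::real_inner \<Rightarrow> 'a) \<Rightarrow> 'a \<Rightarrow> 'a \<Rightarrow> complex" where
  "cinner J x y = Complex (inner x y) (- inner (J x) y)"

definition bounded_op :: "('a::real_inner \<Rightarrow> 'a) \<Rightarrow> ('a \<Rightarrow> 'a) \<Rightarrow> bool" where
  "bounded_op J T \<longleftrightarrow> bounded_linear T \<and> (\<forall>x. T (J x) = J (T x))"

definition is_adjoint :: "('a::real_inner \<Rightarrow> 'a) \<Rightarrow> ('a \<Rightarrow> 'a) \<Rightarrow> ('a \<Rightarrow> 'a) \<Rightarrow> bool" where
  "is_adjoint J T T' \<longleftrightarrow> (\<forall>x y. cinner J (T x) y = cinner J x (T' y))"

definition positive_op :: "('a::real_inner \<Rightarrow> 'a) \<Rightarrow> ('a \<Rightarrow> 'a) \<Rightarrow> bool" where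
  "positive_op J A \<longleftrightarrow> (\<forall>x. Im (cinner J (A x) x) = 0 \<and> Re (cinner J (A x) x) \<ge> 0)"

end

theory Submission
  imports Defs
begin

lemma inner_ext_eq:
  fixes p q :: "'a::real_inner"
  assumes "\<And>x. inner x p = inner x q"
  shows "p = q"
proof -
  have "inner (p - q) p = inner (p - q) q" by (rule assms)
  hence "inner (p - q) (p - q) = 0" by (simp add: inner_diff_right)
  thus ?thesis by simp
qed

lemma parallelogram_eq:
  fixes u w :: "'a::real_inner"
  shows "(norm (u - w))^2 + (norm (u + w))^2 = 2*(norm u)^2 + 2*(norm w)^2"
  by (simp add: power2_norm_eq_inner inner_add_left inner_add_right
      inner_diff_left inner_diff_right inner_commute)

lemma surj_lemma:
  fixes C :: "'a::{real_inner,complete_space} \<Rightarrow> 'a"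
  assumes lin: "bounded_linear C"
    and cpos: "c > 0" and below: "\<And>z. c * (norm z)^2 \<le> (norm (C z))^2"
    and orth: "\<And>v. (\<forall>z. inner v (C z) = 0) \<Longrightarrow> v = 0"
  shows "\<exists>z. C z = y"
proof -
  interpret C: bounded_linear C by fact
  define S where "S = (\<lambda>z. (norm (y - C z))^2) ` UNIV"
  define d where "d = Inf S"
  have bdd: "bdd_below S" unfolding S_def by (rule bdd_belowI[of _ 0]) auto
  have dle: "\<And>z. d \<le> (norm (y - C z))^2"
    unfolding d_def S_def by (rule cInf_lower) (use bdd S_def in auto)
  have "\<exists>z. (norm (y - C z))^2 < d + inverse (real (Suc n))" for n
  proof -
    have "Inf S < d + inverse (real (Suc n))" unfolding d_def by simp
    from cInf_lessD[OF _ this] show ?thesis unfolding S_def by auto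
  qed
  then obtain zs where zs: "\<And>n. (norm (y - C (zs n)))^2 < d + inverse (real (Suc n))"
    by metis
  have par: "(norm (C (zs n) - C (zs m)))^2 \<le> 2 * inverse (real (Suc n)) + 2 * inverse (real (Suc m))"
    for n m
  proof -
    define u where "u = y - C (zs n)"
    define w where "w = y - C (zs m)"
    have e1: "C (zs n) - C (zs m) = w - u" unfolding u_def w_def by simp
    have e2: "u + w = 2 *\<^sub>R (y - C ((1/2) *\<^sub>R (zs n + zs m)))"
      unfolding u_def w_def by (simp add: C.scaleR C.add algebra_simps scaleR_2)
    have "(norm (u + w))^2 = 4 * (norm (y - C ((1/2) *\<^sub>R (zs n + zs m))))^2"
      unfolding e2 by (simp add: power2_eq_square)
    hence "(norm (u + w))^2 \<ge> 4 * d" using dle by (smt (verit))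
    moreover have "(norm (w - u))^2 + (norm (w + u))^2 = 2*(norm w)^2 + 2*(norm u)^2"
      by (rule parallelogram_eq)
    moreover note zs[of n] zs[of m]
    ultimately show ?thesis unfolding e1 u_def w_def by (simp add: add.commute) 
  qed
  have cau: "Cauchy zs"
  proof (rule metric_CauchyI)
    fix e :: real assume "e > 0"
    obtain M :: nat where M: "4 / (c * e^2) < real M" using reals_Archimedean2 by blast
    have "\<forall>m\<ge>M. \<forall>n\<ge>M. dist (zs m) (zs n) < e"
    proof (intro allI impI)
      fix m n assume "m \<ge> M" "n \<ge> M"
      have im: "inverse (real (Suc m)) \<le> inverse (real (Suc M))"
        using \<open>m \<ge> M\<close> by (simp add: field_simps)
      have iN: "inverse (real (Suc n)) \<le> inverse (real (Suc M))"
        using \<open>n \<ge> M\<close> by (simp add: field_simps)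
      have "c * (norm (zs m - zs n))^2 \<le> (norm (C (zs m) - C (zs n)))^2"
        using below[of "zs m - zs n"] by (simp add: C.diff)
      also have "\<dots> \<le> 4 * inverse (real (Suc M))" using par[of m n] im iN by linarith
      also have "\<dots> < c * e^2"
      proof -
        have "4 / (c * e^2) < real (Suc M)" using M by simp
        hence "4 < c * e^2 * real (Suc M)" using \<open>c>0\<close> \<open>e>0\<close>
          by (simp add: field_simps)
        thus ?thesis by (simp add: field_simps)
      qed
      finally have "(norm (zs m - zs n))^2 < e^2" using \<open>c>0\<close> by simp
      hence "norm (zs m - zs n) < e" using \<open>e>0\<close> by (meson abs_less_iff power2_less_imp_less less_le)
      thus "dist (zs m) (zs n) < e" by (simp add: dist_norm)
    qed
    thus "\<exists>M. \<forall>m\<ge>M. \<forall>n\<ge>M. dist (zs m) (zs n) < e" by blast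
  qed
  then obtain z where z: "zs \<longlonglongrightarrow> z" using Cauchy_convergent_iff convergent_def by blast
  have "(\<lambda>n. (norm (y - C (zs n)))^2) \<longlonglongrightarrow> (norm (y - C z))^2"
    by (intro tendsto_intros C.tendsto z)
  hence zmin: "(norm (y - C z))^2 \<le> d"
    by (rule LIMSEQ_le[OF _ LIMSEQ_inverse_real_of_nat_add]) (use zs less_imp_le in auto)
  define e where "e = y - C z"
  have "inner e (C v) = 0" for v
  proof -
    define p where "p = inner e (C v)"
    define V where "V = (norm (C v))^2"
    define t where "t = p / (V + 1)"
    have V0: "V \<ge> 0" unfolding V_def by simp
    have eq: "e - t *\<^sub>R C v = y - C (z + t *\<^sub>R v)" unfolding e_def by (simp add: C.add C.scaleR)
    have "(norm e)^2 \<le> d" using zmin e_def by simp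
    hence "(norm (e - t *\<^sub>R C v))^2 \<ge> (norm e)^2" unfolding eq using dle[of "z + t *\<^sub>R v"] by linarith
    moreover have "(norm (e - t *\<^sub>R C v))^2 = (norm e)^2 - 2 * t * p + t^2 * V"
      unfolding p_def V_def power2_norm_eq_inner
      by (simp add: inner_diff_left inner_diff_right inner_commute power2_eq_square algebra_simps)
    ultimately have "t^2 * V \<ge> 2 * t * p" by simp
    moreover have tp: "p = t * (V + 1)" unfolding t_def using V0 by simp
    ultimately have "t^2 * (V + 2) \<le> 0" by (simp add: algebra_simps power2_eq_square)
    moreover have "V + 2 > 0" using V0 by simp
    ultimately have "t^2 \<le> 0" by (simp add: mult_le_0_iff)
    hence "t = 0" by simp
    hence "p = 0" using tp by simp
    thus ?thesis unfolding p_def by simp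
  qed
  hence "e = 0" using orth by blast
  thus ?thesis unfolding e_def by auto
qed

theorem lemma1p5:
  fixes J A B Bs :: "'a::{real_inner, complete_space} \<Rightarrow> 'a" and \<mu> :: real
  assumes "complex_structure J"
    and "bounded_op J A" and "bounded_op J B"
    and "is_adjoint J B Bs"
    and "positive_op J A"
    and "0 < \<mu>" and "\<mu> < 1"
    and "\<forall>x. B (Bs x) - Bs (B x) = (1 - \<mu>) *\<^sub>R A x"
    and "\<forall>x. A x + Bs (B x) = x"
  shows "{x. B x = 0} = {0} \<longleftrightarrow> (\<forall>x. A x = 0)"
proof -
  have lA: "bounded_linear A" using assms(2) unfolding bounded_op_def by simp
  have lB: "bounded_linear B" using assms(3) unfolding bounded_op_def by simp
  interpret A: bounded_linear A by (rule lA)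
  interpret B: bounded_linear B by (rule lB)
  have mu0: "0 < \<mu>" and mu1: "\<mu> < 1" using assms(6,7) by auto
  have adj: "inner (B x) y = inner x (Bs y)" for x y
  proof -
    have "cinner J (B x) y = cinner J x (Bs y)" using assms(4) unfolding is_adjoint_def by simp
    hence "Re (cinner J (B x) y) = Re (cinner J x (Bs y))" by simp
    thus ?thesis unfolding cinner_def by simp
  qed
  have pos: "inner (A x) x \<ge> 0" for x
    using assms(5) unfolding positive_op_def cinner_def by simp
  have BsB: "Bs (B x) = x - A x" for x using assms(9) by (metis add_diff_cancel_left')
  have BBs: "B (Bs w) = w - \<mu> *\<^sub>R A w" for w
  proof -
    have "B (Bs w) = Bs (B w) + (1 - \<mu>) *\<^sub>R A w" proof -
      have "B (Bs w) - Bs (B w) = (1 - \<mu>) *\<^sub>R A w" using assms(8) by simp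
      thus ?thesis by (metis diff_eq_eq add.commute)
    qed
    thus ?thesis by (simp add: BsB scaleR_diff_left)
  qed
  have normB: "(norm (B x))^2 = (norm x)^2 - inner (A x) x" for x
  proof -
    have "(norm (B x))^2 = inner x (Bs (B x))" by (simp add: power2_norm_eq_inner adj)
    also have "\<dots> = (norm x)^2 - inner (A x) x"
      by (simp add: BsB inner_diff_right power2_norm_eq_inner inner_commute)
    finally show ?thesis .
  qed
  have aleW: "inner (A x) x \<le> (norm x)^2" for x using normB[of x] zero_le_power2[of "norm (B x)"] by linarith
  have normBs: "(norm (Bs w))^2 = (norm w)^2 - \<mu> * inner (A w) w" for w
  proof -
    have "(norm (Bs w))^2 = inner (B (Bs w)) w" by (simp add: power2_norm_eq_inner adj)
    also have "\<dots> = (norm w)^2 - \<mu> * inner (A w) w"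
      by (simp add: BBs inner_diff_left power2_norm_eq_inner)
    finally show ?thesis .
  qed
  have aBs: "inner (A (Bs w)) (Bs w) = \<mu> * inner (A w) w - \<mu>^2 * (norm (A w))^2" for w
  proof -
    have "inner (A (Bs w)) (Bs w) = (norm (Bs w))^2 - (norm (B (Bs w)))^2"
      using normB[of "Bs w"] by simp
    also have "(norm (B (Bs w)))^2 = (norm w)^2 - 2 * \<mu> * inner (A w) w + \<mu>^2 * (norm (A w))^2"
      unfolding BBs power2_norm_eq_inner
      by (simp add: inner_diff_left inner_diff_right inner_commute power2_eq_square algebra_simps)
    finally show ?thesis using normBs[of w] by simp
  qed
  have step: "inner (A (Bs w)) (Bs w) \<le> \<mu> * \<rho> * (norm (Bs w))^2"
    if h: "inner (A w) w \<le> \<rho> * (norm w)^2" for w \<rho>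
  proof -
    define a where "a = inner (A w) w"
    define W where "W = (norm w)^2"
    define N where "N = (norm (A w))^2"
    have a0: "0 \<le> a" and aW: "a \<le> W" and ar: "a \<le> \<rho> * W"
      using pos[of w] aleW[of w] h unfolding a_def W_def by auto
    have cs: "a^2 \<le> N * W"
      unfolding a_def N_def W_def power2_norm_eq_inner by (rule Cauchy_Schwarz_ineq)
    have W0: "W \<ge> 0" unfolding W_def by simp
    have goal: "\<mu> * a - \<mu>^2 * N \<le> \<mu> * \<rho> * (W - \<mu> * a)"
    proof (cases "W = 0")
      case True
      hence "a = 0" using a0 aW by simp
      thus ?thesis using True mu0 unfolding N_def by simp
    next
      case False
      hence Wp: "W > 0" using W0 by simp
      have "W * (a - \<mu> * N) \<le> W * a - \<mu> * a^2"
      proof -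
        have "\<mu> * a^2 \<le> \<mu> * (N * W)" using cs mu0 by (intro mult_left_mono) auto
        moreover have "W * (a - \<mu> * N) = W * a - \<mu> * (N * W)" by (simp add: algebra_simps)
        ultimately show ?thesis by linarith
      qed
      also have "\<dots> \<le> W * (\<rho> * W - \<mu> * \<rho> * a)"
      proof -
        have "0 \<le> (\<rho> * W - a) * (W - \<mu> * a)"
        proof (rule mult_nonneg_nonneg)
          show "0 \<le> \<rho> * W - a" using ar by simp
          have "\<mu> * a \<le> 1 * a" using mu1 a0 by (intro mult_right_mono) auto
          thus "0 \<le> W - \<mu> * a" using aW by simp
        qed
        thus ?thesis by (simp add: algebra_simps power2_eq_square)
      qed
      finally have "W * (a - \<mu> * N) \<le> W * (\<rho> * W - \<mu> * \<rho> * a)" .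
      hence "a - \<mu> * N \<le> \<rho> * W - \<mu> * \<rho> * a" using Wp by simp
      hence "\<mu> * (a - \<mu> * N) \<le> \<mu> * (\<rho> * W - \<mu> * \<rho> * a)"
        using mu0 by (intro mult_left_mono) auto
      thus ?thesis by (simp add: algebra_simps power2_eq_square)
    qed
    show ?thesis using goal unfolding aBs normBs a_def N_def W_def by simp
  qed
  have Bs0: "Bs 0 = 0"
    by (rule inner_ext_eq) (simp flip: adj)
  show ?thesis
  proof
    assume ker: "{x. B x = 0} = {0}"
    have blBs: "bounded_linear Bs"
    proof (rule bounded_linear_intro[where K=1])
      show "Bs (u + v) = Bs u + Bs v" for u v
        by (rule inner_ext_eq) (simp only: adj[symmetric] inner_add_right)
      show "Bs (r *\<^sub>R u) = r *\<^sub>R Bs u" for r u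
        by (rule inner_ext_eq) (simp only: adj[symmetric] inner_scaleR_right)
      show "norm (Bs x) \<le> norm x * 1" for x
      proof -
        have "\<mu> * inner (A x) x \<ge> 0" using pos[of x] mu0 by simp
        hence "(norm (Bs x))^2 \<le> (norm x)^2" using normBs[of x] by linarith
        hence "norm (Bs x) \<le> norm x" by (rule power2_le_imp_le) simp
        thus ?thesis by simp
      qed
    qed
    have surj: "\<exists>z. Bs z = y" for y
    proof (rule surj_lemma[OF blBs, of "1 - \<mu>"])
      show "0 < 1 - \<mu>" using mu1 by simp
      show "(1 - \<mu>) * (norm z)^2 \<le> (norm (Bs z))^2" for z
      proof -
        have "\<mu> * inner (A z) z \<le> \<mu> * (norm z)^2" using aleW[of z] mu0 by (intro mult_left_mono) auto
        thus ?thesis using normBs[of z] by (simp add: left_diff_distrib)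
      qed
      show "v = 0" if "\<forall>z. inner v (Bs z) = 0" for v
      proof -
        have "inner (B v) (B v) = 0" using that by (simp add: adj)
        hence "B v = 0" by simp
        thus ?thesis using ker by auto
      qed
    qed
    have ind: "\<forall>x. inner (A x) x \<le> \<mu>^n * (norm x)^2" for n
    proof (induction n)
      case 0
      then show ?case using aleW by simp
    next
      case (Suc n)
      show ?case
      proof
        fix x
        obtain w where w: "Bs w = x" using surj by blast
        have "inner (A (Bs w)) (Bs w) \<le> \<mu> * \<mu>^n * (norm (Bs w))^2"
          using step Suc by blast
        thus "inner (A x) x \<le> \<mu>^Suc n * (norm x)^2" using w by simp
      qed
    qed
    have a0: "inner (A x) x = 0" for x
    proof (rule ccontr)
      assume ne: "inner (A x) x \<noteq> 0"
      hence ap: "inner (A x) x > 0" using pos[of x] by simp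
      hence Wp: "(norm x)^2 > 0" using aleW[of x] by linarith
      obtain n where n: "\<mu>^n < inner (A x) x / (norm x)^2"
        using real_arch_pow_inv[of "inner (A x) x / (norm x)^2" \<mu>] ap Wp mu1 by auto
      hence "\<mu>^n * (norm x)^2 < inner (A x) x" using Wp by (simp add: field_simps)
      thus False using ind[of n, rule_format, of x] by linarith
    qed
    have symA: "inner (A x) y = inner x (A y)" for x y
    proof -
      have "A x = x - Bs (B x)" "A y = y - Bs (B y)" using BsB by auto
      thus ?thesis by (simp add: inner_diff_left inner_diff_right inner_commute flip: adj)
    qed
    show "\<forall>x. A x = 0"
    proof
      fix x
      have "inner (A (x + A x)) (x + A x) = 0" by (rule a0)
      hence "inner (A x) (A x) + inner (A (A x)) x = 0"
        using a0[of x] a0[of "A x"] by (simp add: A.add inner_add_left inner_add_right)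
      moreover have "inner (A (A x)) x = inner (A x) (A x)" using symA[of "A x" x] by (simp add: inner_commute)
      ultimately have "inner (A x) (A x) = 0" by simp
      thus "A x = 0" by simp
    qed
  next
    assume A0: "\<forall>x. A x = 0"
    show "{x. B x = 0} = {0}"
    proof
      show "{x. B x = 0} \<subseteq> {0}"
      proof
        fix x assume "x \<in> {x. B x = 0}"
        hence "B x = 0" by simp
        hence "x = 0" using assms(9) A0 Bs0 by (metis add_0)
        thus "x \<in> {0}" by simp
      qed
      show "{0} \<subseteq> {x. B x = 0}" by simp
    qed
  qed
qed

end
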